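(* Let $L$ be the graph obtained from the line graph $L(K_{5,6})$ of the complete bipartite graph $K_{5,6}$ by adding, for every edge $uv$ of $L(K_{5,6})$, a new vertex adjacent exactly to $u$ and $v$. Let $L\overline{L}$ be the disjoint union of $L$ and its complement $\overline L$. Then $L\overline{L}$ is not $\cup$-equistable, i.e., neither $L\overline{L}$ nor its complement is equistable.
   Context: A graph $G=(V,E)$ is equistable if there is $\varphi:V\to\mathbb R_+$ such that for all $S\subseteq V$, $S$ is a maximal stable set of $G$ iff $\sum_{v\in S}\varphi(v)=1$. A graph is $\cup$-equistable if it or its complement is equistable. *)

theory Defs
  imports Main "HOL.Real"
begin

text \<open>A (simple) graph is given by a vertex set V and a symmetric irreflexive
adjacency relation E (only its restriction to V matters).\<close>

definition stable_set :: "'a set \<Rightarrow> ('a \<Rightarrow> 'a \<Rightarrow> bool) \<Rightarrow> 'a set \<Rightarrow> bool" where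
  "stable_set V E S \<longleftrightarrow> S \<subseteq> V \<and> (\<forall>u\<in>S. \<forall>v\<in>S. \<not> E u v)"

definition maximal_stable_set :: "'a set \<Rightarrow> ('a \<Rightarrow> 'a \<Rightarrow> bool) \<Rightarrow> 'a set \<Rightarrow> bool" where
  "maximal_stable_set V E S \<longleftrightarrow>
     stable_set V E S \<and> (\<forall>T. stable_set V E T \<and> S \<subseteq> T \<longrightarrow> T = S)"

definition equistable :: "'a set \<Rightarrow> ('a \<Rightarrow> 'a \<Rightarrow> bool) \<Rightarrow> bool" where
  "equistable V E \<longleftrightarrow>
     (\<exists>\<phi> :: 'a \<Rightarrow> real. (\<forall>v\<in>V. \<phi> v \<ge> 0) \<and>
        (\<forall>S. S \<subseteq> V \<longrightarrow> (maximal_stable_set V E S \<longleftrightarrow> (\<Sum>v\<in>S. \<phi> v) = 1)))"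

definition graph_compl :: "('a \<Rightarrow> 'a \<Rightarrow> bool) \<Rightarrow> 'a \<Rightarrow> 'a \<Rightarrow> bool" where
  "graph_compl E = (\<lambda>x y. x \<noteq> y \<and> \<not> E x y)"

definition union_equistable :: "'a set \<Rightarrow> ('a \<Rightarrow> 'a \<Rightarrow> bool) \<Rightarrow> bool" where
  "union_equistable V E \<longleftrightarrow> equistable V E \<or> equistable V (graph_compl E)"

definition du_vertices :: "'a set \<Rightarrow> 'b set \<Rightarrow> ('a + 'b) set" where
  "du_vertices V1 V2 = V1 <+> V2"

fun du_edges :: "('a \<Rightarrow> 'a \<Rightarrow> bool) \<Rightarrow> ('b \<Rightarrow> 'b \<Rightarrow> bool) \<Rightarrow> 'a + 'b \<Rightarrow> 'a + 'b \<Rightarrow> bool" where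
  "du_edges E1 E2 (Inl x) (Inl y) = E1 x y"
| "du_edges E1 E2 (Inr x) (Inr y) = E2 x y"
| "du_edges E1 E2 _ _ = False"

text \<open>Line graph of K_{5,6}: vertices are the edges (i,j), i<5, j<6; two are adjacent
iff they are distinct and share an endpoint.\<close>
definition K56_edges :: "(nat \<times> nat) set" where
  "K56_edges = {0..<5} \<times> {0..<6}"

definition lineK56_adj :: "nat \<times> nat \<Rightarrow> nat \<times> nat \<Rightarrow> bool" where
  "lineK56_adj u v \<longleftrightarrow> u \<in> K56_edges \<and> v \<in> K56_edges \<and> u \<noteq> v \<and>
                         (fst u = fst v \<or> snd u = snd v)"

text \<open>The graph L: L(K_{5,6}) plus, for every edge uv of L(K_{5,6}), a new vertex
\<open>New {u,v}\<close> adjacent exactly to u and v.\<close>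
datatype Lvert = Orig "nat \<times> nat" | New "(nat \<times> nat) set"

definition L_vertices :: "Lvert set" where
  "L_vertices = Orig ` K56_edges \<union> {New {u, v} | u v. lineK56_adj u v}"

fun L_adj :: "Lvert \<Rightarrow> Lvert \<Rightarrow> bool" where
  "L_adj (Orig u) (Orig v) = lineK56_adj u v"
| "L_adj (New e) (Orig w) = (w \<in> e)"
| "L_adj (Orig w) (New e) = (w \<in> e)"
| "L_adj (New e) (New f) = False"

definition LLbar_vertices :: "(Lvert + Lvert) set" where
  "LLbar_vertices = du_vertices L_vertices L_vertices"

definition LLbar_adj :: "Lvert + Lvert \<Rightarrow> Lvert + Lvert \<Rightarrow> bool" where
  "LLbar_adj = du_edges L_adj (graph_compl L_adj)"

end

theory Submission
  imports Defs
begin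

lemma row_max:
  assumes "i < 5"
  shows "maximal_stable_set L_vertices (graph_compl L_adj) (Orig ` ({i} \<times> {0..<6}))"
  unfolding maximal_stable_set_def stable_set_def
proof (intro conjI allI impI)
  show "Orig ` ({i} \<times> {0..<6}) \<subseteq> L_vertices" using assms
    by (auto simp: L_vertices_def K56_edges_def)
  show "\<forall>u\<in>Orig ` ({i} \<times> {0..<6}). \<forall>v\<in>Orig ` ({i} \<times> {0..<6}). \<not> graph_compl L_adj u v"
    using assms by (auto simp: graph_compl_def lineK56_adj_def K56_edges_def)
  fix T assume H: "(T \<subseteq> L_vertices \<and> (\<forall>u\<in>T. \<forall>v\<in>T. \<not> graph_compl L_adj u v)) \<and> Orig ` ({i} \<times> {0..<6}) \<subseteq> T"
  show "T = Orig ` ({i} \<times> {0..<6})"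
  proof
    show "T \<subseteq> Orig ` ({i} \<times> {0..<6})"
    proof
      fix t assume tT: "t \<in> T"
      have adj: "\<And>s. s \<in> Orig ` ({i} \<times> {0..<6}) \<Longrightarrow> s = t \<or> L_adj s t"
        using H tT unfolding graph_compl_def by blast
      have "t \<in> L_vertices" using H tT by blast
      then consider (o) a b where "t = Orig (a,b)" "a < 5" "b < 6"
        | (n) x y where "t = New {x,y}" "lineK56_adj x y"
        unfolding L_vertices_def K56_edges_def by auto
      then show "t \<in> Orig ` ({i} \<times> {0..<6})"
      proof cases
        case o
        show ?thesis
        proof (rule ccontr)
          assume "t \<notin> Orig ` ({i} \<times> {0..<6})"
          then have "a \<noteq> i" using o by auto
          define j where "j = (if b = 0 then 1 else (0::nat))"
          have "Orig (i,j) = t \<or> L_adj (Orig (i,j)) t"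
            using adj[of "Orig (i,j)"] by (auto simp: j_def)
          then show False using o \<open>a \<noteq> i\<close> by (auto simp: j_def lineK56_adj_def split: if_splits)
        qed
      next
        case n
        have "L_adj (Orig (i,0)) t" "L_adj (Orig (i,1)) t" "L_adj (Orig (i,2)) t"
          using adj[of "Orig (i,0)"] adj[of "Orig (i,1)"] adj[of "Orig (i,2)"] n by auto
        then show ?thesis using n by auto
      qed
    qed
  qed (use H in blast)
qed

lemma col_max:
  assumes "j < 6"
  shows "maximal_stable_set L_vertices (graph_compl L_adj) (Orig ` ({0..<5} \<times> {j}))"
  unfolding maximal_stable_set_def stable_set_def
proof (intro conjI allI impI)
  show "Orig ` ({0..<5} \<times> {j}) \<subseteq> L_vertices" using assms
    by (auto simp: L_vertices_def K56_edges_def)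
  show "\<forall>u\<in>Orig ` ({0..<5} \<times> {j}). \<forall>v\<in>Orig ` ({0..<5} \<times> {j}). \<not> graph_compl L_adj u v"
    using assms by (auto simp: graph_compl_def lineK56_adj_def K56_edges_def)
  fix T assume H: "(T \<subseteq> L_vertices \<and> (\<forall>u\<in>T. \<forall>v\<in>T. \<not> graph_compl L_adj u v)) \<and> Orig ` ({0..<5} \<times> {j}) \<subseteq> T"
  show "T = Orig ` ({0..<5} \<times> {j})"
  proof
    show "T \<subseteq> Orig ` ({0..<5} \<times> {j})"
    proof
      fix t assume tT: "t \<in> T"
      have adj: "\<And>s. s \<in> Orig ` ({0..<5} \<times> {j}) \<Longrightarrow> s = t \<or> L_adj s t"
        using H tT unfolding graph_compl_def by blast
      have "t \<in> L_vertices" using H tT by blast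
      then consider (o) a b where "t = Orig (a,b)" "a < 5" "b < 6"
        | (n) x y where "t = New {x,y}" "lineK56_adj x y"
        unfolding L_vertices_def K56_edges_def by auto
      then show "t \<in> Orig ` ({0..<5} \<times> {j})"
      proof cases
        case o
        show ?thesis
        proof (rule ccontr)
          assume "t \<notin> Orig ` ({0..<5} \<times> {j})"
          then have "b \<noteq> j" using o by auto
          define i where "i = (if a = 0 then 1 else (0::nat))"
          have "Orig (i,j) = t \<or> L_adj (Orig (i,j)) t"
            using adj[of "Orig (i,j)"] by (auto simp: i_def)
          then show False using o \<open>b \<noteq> j\<close> by (auto simp: i_def lineK56_adj_def split: if_splits)
        qed
      next
        case n
        have "L_adj (Orig (0,j)) t" "L_adj (Orig (1,j)) t" "L_adj (Orig (2,j)) t"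
          using adj[of "Orig (0,j)"] adj[of "Orig (1,j)"] adj[of "Orig (2,j)"] n by auto
        then show ?thesis using n by auto
      qed
    qed
  qed (use H in blast)
qed

lemma row_sum:
  assumes "inj h"
  shows "sum g (h ` Orig ` ({i} \<times> {0..<6})) = (\<Sum>j<6. g (h (Orig (i,j))))"
proof -
  have "h ` Orig ` ({i} \<times> {0..<6}) = (\<lambda>j. h (Orig (i,j))) ` {..<6}" by auto
  moreover have "inj_on (\<lambda>j. h (Orig (i,j))) {..<6}" using assms by (auto simp: inj_on_def inj_def)
  ultimately show ?thesis by (simp add: sum.reindex)
qed

lemma col_sum:
  assumes "inj h"
  shows "sum g (h ` Orig ` ({0..<5} \<times> {j})) = (\<Sum>i<5. g (h (Orig (i,j))))"
proof -
  have "h ` Orig ` ({0..<5} \<times> {j}) = (\<lambda>i. h (Orig (i,j))) ` {..<5}" by auto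
  moreover have "inj_on (\<lambda>i. h (Orig (i,j))) {..<5}" using assms by (auto simp: inj_on_def inj_def)
  ultimately show ?thesis by (simp add: sum.reindex)
qed

lemma grid_sums:
  fixes f :: "nat \<Rightarrow> nat \<Rightarrow> real"
  assumes "\<And>i. i < 5 \<Longrightarrow> (\<Sum>j<6. f i j) = 1 - c"
    and "\<And>j. j < 6 \<Longrightarrow> (\<Sum>i<5. f i j) = 1 - c"
  shows "c = 1"
proof -
  have "(\<Sum>i<5. \<Sum>j<6. f i j) = 5 * (1 - c)" using assms(1) by simp
  moreover have "(\<Sum>j<6. \<Sum>i<5. f i j) = 6 * (1 - c)" using assms(2) by simp
  moreover have "(\<Sum>i<5. \<Sum>j<6. f i j) = (\<Sum>j<6. \<Sum>i<5. f i j)" by (rule sum.swap)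
  ultimately have "5 * (1 - c) = 6 * (1 - c)" by metis
  then show ?thesis by simp
qed

lemma finite_L: "finite L_vertices"
proof -
  have "L_vertices \<subseteq> Orig ` K56_edges \<union> (\<lambda>(u,v). New {u,v}) ` (K56_edges \<times> K56_edges)"
    unfolding L_vertices_def lineK56_adj_def by auto
  moreover have "finite K56_edges" unfolding K56_edges_def by simp
  ultimately show ?thesis by (meson finite_SigmaI finite_UnI finite_imageI finite_subset)
qed

lemma exists_max:
  assumes "finite V"
  shows "\<exists>S. maximal_stable_set V E S"
proof -
  have "finite {S. stable_set V E S}"
    by (rule finite_subset[of _ "Pow V"]) (auto simp: stable_set_def assms)
  moreover have "{} \<in> {S. stable_set V E S}" by (simp add: stable_set_def)
  ultimately obtain m where "m \<in> {S. stable_set V E S}" "\<forall>b\<in>{S. stable_set V E S}. m \<subseteq> b \<longrightarrow> m = b"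
    using finite_has_maximal[of "{S. stable_set V E S}"] by blast
  then show ?thesis unfolding maximal_stable_set_def by blast
qed

lemma du_max:
  assumes "maximal_stable_set V1 E1 S1" "maximal_stable_set V2 E2 S2"
  shows "maximal_stable_set (V1 <+> V2) (du_edges E1 E2) (Inl ` S1 \<union> Inr ` S2)"
  unfolding maximal_stable_set_def
proof (intro conjI allI impI)
  show "stable_set (V1 <+> V2) (du_edges E1 E2) (Inl ` S1 \<union> Inr ` S2)"
    using assms unfolding maximal_stable_set_def stable_set_def by auto
  fix T assume H: "stable_set (V1 <+> V2) (du_edges E1 E2) T \<and> Inl ` S1 \<union> Inr ` S2 \<subseteq> T"
  have "stable_set V1 E1 {x. Inl x \<in> T}" using H unfolding stable_set_def by fastforce
  moreover have "S1 \<subseteq> {x. Inl x \<in> T}" using H by auto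
  ultimately have 1: "{x. Inl x \<in> T} = S1" using assms(1) unfolding maximal_stable_set_def by blast
  have "stable_set V2 E2 {x. Inr x \<in> T}" using H unfolding stable_set_def by fastforce
  moreover have "S2 \<subseteq> {x. Inr x \<in> T}" using H by auto
  ultimately have 2: "{x. Inr x \<in> T} = S2" using assms(2) unfolding maximal_stable_set_def by blast
  show "T = Inl ` S1 \<union> Inr ` S2"
  proof
    show "T \<subseteq> Inl ` S1 \<union> Inr ` S2"
    proof
      fix t assume "t \<in> T" then show "t \<in> Inl ` S1 \<union> Inr ` S2"
        using 1 2 by (cases t) auto
    qed
  qed (use H in blast)
qed

lemma join_max:
  assumes "maximal_stable_set V1 (graph_compl E1) S" "S \<noteq> {}"
  shows "maximal_stable_set (V1 <+> V2) (graph_compl (du_edges E1 E2)) (Inl ` S)"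
  unfolding maximal_stable_set_def
proof (intro conjI allI impI)
  show "stable_set (V1 <+> V2) (graph_compl (du_edges E1 E2)) (Inl ` S)"
    using assms unfolding maximal_stable_set_def stable_set_def graph_compl_def by auto
  fix T assume H: "stable_set (V1 <+> V2) (graph_compl (du_edges E1 E2)) T \<and> Inl ` S \<subseteq> T"
  obtain s where s: "s \<in> S" using assms(2) by blast
  have noR: "\<And>x. Inr x \<notin> T"
  proof
    fix x assume "Inr x \<in> T"
    moreover have "Inl s \<in> T" using H s by blast
    ultimately show False using H unfolding stable_set_def graph_compl_def by fastforce
  qed
  have "stable_set V1 (graph_compl E1) {x. Inl x \<in> T}" using H unfolding stable_set_def graph_compl_def by fastforce
  moreover have "S \<subseteq> {x. Inl x \<in> T}" using H by auto
  ultimately have 1: "{x. Inl x \<in> T} = S" using assms(1) unfolding maximal_stable_set_def by blast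
  show "T = Inl ` S"
  proof
    show "T \<subseteq> Inl ` S"
    proof
      fix t assume "t \<in> T" then show "t \<in> Inl ` S"
        using 1 noR by (cases t) auto
    qed
  qed (use H in blast)
qed

lemma Lbar_eq: "du_edges L_adj (graph_compl L_adj) = LLbar_adj" by (simp add: LLbar_adj_def)

theorem proposition40:
  shows "\<not> union_equistable LLbar_vertices LLbar_adj"
  unfolding union_equistable_def
proof
  assume "equistable LLbar_vertices LLbar_adj \<or> equistable LLbar_vertices (graph_compl LLbar_adj)"
  then show False
  proof
    assume "equistable LLbar_vertices LLbar_adj"
    then obtain \<phi> :: "Lvert + Lvert \<Rightarrow> real" where
      ph: "\<forall>S. S \<subseteq> LLbar_vertices \<longrightarrow> (maximal_stable_set LLbar_vertices LLbar_adj S \<longleftrightarrow> (\<Sum>v\<in>S. \<phi> v) = 1)"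
      unfolding equistable_def by blast
    obtain S0 where S0: "maximal_stable_set L_vertices L_adj S0" using exists_max finite_L by blast
    have fS0: "finite S0" using S0 finite_L unfolding maximal_stable_set_def stable_set_def
      using finite_subset by blast
    define c where "c = sum \<phi> (Inl ` S0)"
    have key: "\<And>R. maximal_stable_set L_vertices (graph_compl L_adj) R \<Longrightarrow> finite R \<Longrightarrow>
        c + sum \<phi> (Inr ` R) = 1 \<and> maximal_stable_set LLbar_vertices LLbar_adj (Inl ` S0 \<union> Inr ` R)"
    proof -
      fix R assume R: "maximal_stable_set L_vertices (graph_compl L_adj) R" "finite R"
      have M: "maximal_stable_set LLbar_vertices LLbar_adj (Inl ` S0 \<union> Inr ` R)"
        using du_max[OF S0 R(1)] unfolding LLbar_vertices_def du_vertices_def LLbar_adj_def .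
      have "Inl ` S0 \<union> Inr ` R \<subseteq> LLbar_vertices" using M by (simp add: maximal_stable_set_def stable_set_def)
      then have "sum \<phi> (Inl ` S0 \<union> Inr ` R) = 1" using ph M by blast
      moreover have "sum \<phi> (Inl ` S0 \<union> Inr ` R) = c + sum \<phi> (Inr ` R)"
        unfolding c_def by (rule sum.union_disjoint) (use fS0 R(2) in auto)
      ultimately show "c + sum \<phi> (Inr ` R) = 1 \<and> maximal_stable_set LLbar_vertices LLbar_adj (Inl ` S0 \<union> Inr ` R)"
        using M by simp
    qed
    have "c = 1"
    proof (rule grid_sums[where f = "\<lambda>i j. \<phi> (Inr (Orig (i,j)))"])
      fix i :: nat assume "i < 5"
      then have "c + sum \<phi> (Inr ` Orig ` ({i} \<times> {0..<6})) = 1" using key[OF row_max] by simp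
      then show "(\<Sum>j<6. \<phi> (Inr (Orig (i,j)))) = 1 - c" using row_sum[of Inr \<phi> i] by simp
    next
      fix j :: nat assume "j < 6"
      then have "c + sum \<phi> (Inr ` Orig ` ({0..<5} \<times> {j})) = 1" using key[OF col_max] by simp
      then show "(\<Sum>i<5. \<phi> (Inr (Orig (i,j)))) = 1 - c" using col_sum[of Inr \<phi> j] by simp
    qed
    moreover have "Inl ` S0 \<subseteq> LLbar_vertices" using S0
      unfolding maximal_stable_set_def stable_set_def LLbar_vertices_def du_vertices_def by auto
    ultimately have M0: "maximal_stable_set LLbar_vertices LLbar_adj (Inl ` S0)"
      using ph unfolding c_def by blast
    have M1: "maximal_stable_set LLbar_vertices LLbar_adj (Inl ` S0 \<union> Inr ` Orig ` ({0} \<times> {0..<6}))"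
      using key[OF row_max] by simp
    have st: "stable_set LLbar_vertices LLbar_adj (Inl ` S0 \<union> Inr ` Orig ` ({0} \<times> {0..<6}))"
      using M1 by (simp add: maximal_stable_set_def)
    have "Inl ` S0 \<union> Inr ` Orig ` ({0} \<times> {0..<6}) = Inl ` S0"
      using M0 st unfolding maximal_stable_set_def by blast
    moreover have "Inr (Orig (0,0)) \<in> Inl ` S0 \<union> Inr ` Orig ` ({0} \<times> {0..<6})" by simp
    moreover have "Inr (Orig (0,0)) \<notin> Inl ` S0" by blast
    ultimately show False by blast
  next
    assume "equistable LLbar_vertices (graph_compl LLbar_adj)"
    then obtain \<phi> :: "Lvert + Lvert \<Rightarrow> real" where
      ph: "\<forall>S. S \<subseteq> LLbar_vertices \<longrightarrow> (maximal_stable_set LLbar_vertices (graph_compl LLbar_adj) S \<longleftrightarrow> (\<Sum>v\<in>S. \<phi> v) = 1)"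
      unfolding equistable_def by blast
    have key: "\<And>R. maximal_stable_set L_vertices (graph_compl L_adj) R \<Longrightarrow> R \<noteq> {} \<Longrightarrow> sum \<phi> (Inl ` R) = 1"
    proof -
      fix R assume R: "maximal_stable_set L_vertices (graph_compl L_adj) R" "R \<noteq> {}"
      have M: "maximal_stable_set LLbar_vertices (graph_compl LLbar_adj) (Inl ` R)"
        using join_max[OF R, of L_vertices "graph_compl L_adj"]
        unfolding LLbar_vertices_def du_vertices_def LLbar_adj_def .
      have "Inl ` R \<subseteq> LLbar_vertices" using M by (simp add: maximal_stable_set_def stable_set_def)
      then show "sum \<phi> (Inl ` R) = 1" using ph M by blast
    qed
    have "(0::real) = 1"
    proof (rule grid_sums[where f = "\<lambda>i j. \<phi> (Inl (Orig (i,j)))"])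
      fix i :: nat assume "i < 5"
      then have "sum \<phi> (Inl ` Orig ` ({i} \<times> {0..<6})) = 1" using key[OF row_max] by simp
      then show "(\<Sum>j<6. \<phi> (Inl (Orig (i,j)))) = 1 - 0" using row_sum[of Inl \<phi> i] by simp
    next
      fix j :: nat assume "j < 6"
      then have "sum \<phi> (Inl ` Orig ` ({0..<5} \<times> {j})) = 1" using key[OF col_max] by simp
      then show "(\<Sum>i<5. \<phi> (Inl (Orig (i,j)))) = 1 - 0" using col_sum[of Inl \<phi> j] by simp
    qed
    then show False by simp
  qed
qed

end
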